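(* For a tournament $\mathrel{W}$ on $\mathcal{X}$, the following are equivalent: (1) $\mathrel{W}$ is not a ranking (i.e. is not transitive); (2) for some ranking $\succ$ on $\mathcal{X}$ (the chair's preference), the chair benefits from agenda-setting under $\mathrel{W}$; (3) for every ranking $\succ$ on $\mathcal{X}$, the chair benefits from agenda-setting under $\mathrel{W}$.
   Context: Let $\mathcal{X}$ be a finite set of alternatives. A proto-ranking is an irreflexive transitive relation; a ranking is a total proto-ranking; a tournament is a total asymmetric relation on $\mathcal{X}$. Interaction: given a tournament $\mathrel{W}$, start from $R_0=\varnothing$; in each period with $R_{t-1}$ not total the chair offers a pair $\{x,y\}$ unranked by $R_{t-1}$, the winner is $x$ if $x\mathrel{W}y$ and $y$ otherwise, and $R_t$ is the transitive closure of $R_{t-1}\cup\{(\text{winner},\text{loser})\}$; stop when $R_t$ is total. A strategy assigns to each non-terminal history a pair unranked at it; its outcome under $\mathrel{W}$ is the final ranking. A ranking is $\mathrel{W}$-feasible if it is the outcome under $\mathrel{W}$ of some strategy. Given the chair's preference $\succ$ (a ranking), $R$ is more aligned with $\succ$ than $R'$ if for all $x\succ y$, $xR'y$ implies $xRy$; a ranking is $\mathrel{W}$-unimprovable if no other $\mathrel{W}$-feasible ranking is more aligned with $\succ$. Given $\succ$, the chair benefits from agenda-setting under $\mathrel{W}$ if there exists a $\mathrel{W}$-feasible ranking that is not $\mathrel{W}$-unimprovable. *)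

theory Defs
  imports Main
begin

definition proto_ranking :: "'a set \<Rightarrow> ('a \<times> 'a) set \<Rightarrow> bool" where
  "proto_ranking X R \<longleftrightarrow> R \<subseteq> X \<times> X \<and> irrefl R \<and> trans R"

definition total_rel :: "'a set \<Rightarrow> ('a \<times> 'a) set \<Rightarrow> bool" where
  "total_rel X R \<longleftrightarrow> (\<forall>x\<in>X. \<forall>y\<in>X. x \<noteq> y \<longrightarrow> (x, y) \<in> R \<or> (y, x) \<in> R)"

definition ranking :: "'a set \<Rightarrow> ('a \<times> 'a) set \<Rightarrow> bool" where
  "ranking X R \<longleftrightarrow> proto_ranking X R \<and> total_rel X R"

definition tournament :: "'a set \<Rightarrow> ('a \<times> 'a) set \<Rightarrow> bool" where
  "tournament X W \<longleftrightarrow> W \<subseteq> X \<times> X \<and> total_rel X W \<and>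
     (\<forall>x y. (x, y) \<in> W \<longrightarrow> (y, x) \<notin> W)"

definition unranked :: "'a set \<Rightarrow> ('a \<times> 'a) set \<Rightarrow> 'a \<times> 'a \<Rightarrow> bool" where
  "unranked X R p \<longleftrightarrow> fst p \<in> X \<and> snd p \<in> X \<and> fst p \<noteq> snd p \<and>
     p \<notin> R \<and> prod.swap p \<notin> R"

(* A history is the list of recorded (winner, loser) results so far;
   its state is the transitive closure of these results (R_0 = {}). *)
definition hist_state :: "('a \<times> 'a) list \<Rightarrow> ('a \<times> 'a) set" where
  "hist_state h = trancl (set h)"

definition valid_history :: "'a set \<Rightarrow> ('a \<times> 'a) list \<Rightarrow> bool" where
  "valid_history X h \<longleftrightarrow> (\<forall>i < length h. unranked X (hist_state (take i h)) (h ! i))"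

definition nonterminal_history :: "'a set \<Rightarrow> ('a \<times> 'a) list \<Rightarrow> bool" where
  "nonterminal_history X h \<longleftrightarrow> valid_history X h \<and> \<not> total_rel X (hist_state h)"

(* a strategy offers, at each non-terminal history, a pair (x,y) (standing for {x,y})
   that is unranked there *)
definition strategy :: "'a set \<Rightarrow> (('a \<times> 'a) list \<Rightarrow> 'a \<times> 'a) \<Rightarrow> bool" where
  "strategy X \<sigma> \<longleftrightarrow> (\<forall>h. nonterminal_history X h \<longrightarrow> unranked X (hist_state h) (\<sigma> h))"

definition winner_loser :: "('a \<times> 'a) set \<Rightarrow> 'a \<times> 'a \<Rightarrow> 'a \<times> 'a" where
  "winner_loser W p = (if p \<in> W then p else prod.swap p)"

fun run :: "('a \<times> 'a) set \<Rightarrow> (('a \<times> 'a) list \<Rightarrow> 'a \<times> 'a) \<Rightarrow> nat \<Rightarrow> ('a \<times> 'a) list" where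
  "run W \<sigma> 0 = []"
| "run W \<sigma> (Suc t) = run W \<sigma> t @ [winner_loser W (\<sigma> (run W \<sigma> t))]"

definition outcome :: "'a set \<Rightarrow> ('a \<times> 'a) set \<Rightarrow> (('a \<times> 'a) list \<Rightarrow> 'a \<times> 'a) \<Rightarrow> ('a \<times> 'a) set \<Rightarrow> bool" where
  "outcome X W \<sigma> R \<longleftrightarrow> (\<exists>n. total_rel X (hist_state (run W \<sigma> n)) \<and>
      (\<forall>m < n. \<not> total_rel X (hist_state (run W \<sigma> m))) \<and> R = hist_state (run W \<sigma> n))"

definition feasible :: "'a set \<Rightarrow> ('a \<times> 'a) set \<Rightarrow> ('a \<times> 'a) set \<Rightarrow> bool" where
  "feasible X W R \<longleftrightarrow> ranking X R \<and> (\<exists>\<sigma>. strategy X \<sigma> \<and> outcome X W \<sigma> R)"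

definition more_aligned :: "('a \<times> 'a) set \<Rightarrow> ('a \<times> 'a) set \<Rightarrow> ('a \<times> 'a) set \<Rightarrow> bool" where
  "more_aligned P R R' \<longleftrightarrow> (\<forall>x y. (x, y) \<in> P \<longrightarrow> (x, y) \<in> R' \<longrightarrow> (x, y) \<in> R)"

definition unimprovable :: "'a set \<Rightarrow> ('a \<times> 'a) set \<Rightarrow> ('a \<times> 'a) set \<Rightarrow> ('a \<times> 'a) set \<Rightarrow> bool" where
  "unimprovable X W P R \<longleftrightarrow> \<not> (\<exists>R'. feasible X W R' \<and> R' \<noteq> R \<and> more_aligned P R' R)"

definition benefits :: "'a set \<Rightarrow> ('a \<times> 'a) set \<Rightarrow> ('a \<times> 'a) set \<Rightarrow> bool" where
  "benefits X W P \<longleftrightarrow> (\<exists>R. feasible X W R \<and> \<not> unimprovable X W P R)"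

end

theory Submission
  imports Defs
begin


fun rel_of :: "'a list \<Rightarrow> ('a \<times> 'a) set" where
  "rel_of [] = {}"
| "rel_of (a # l) = {a} \<times> set l \<union> rel_of l"

lemma rel_of_append: "rel_of (l1 @ l2) = rel_of l1 \<union> set l1 \<times> set l2 \<union> rel_of l2"
  by (induction l1) auto

lemma rel_of_sub: "rel_of l \<subseteq> set l \<times> set l"
  by (induction l) auto

lemma rel_of_irrefl: "distinct l \<Longrightarrow> (u, u) \<notin> rel_of l"
  by (induction l) (auto dest: subsetD[OF rel_of_sub])

lemma rel_of_trans: "distinct l \<Longrightarrow> trans (rel_of l)"
proof (induction l)
  case Nil then show ?case by (simp add: trans_def)
next
  case (Cons a l)
  then show ?case using rel_of_sub[of l] unfolding trans_def by auto
qed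

lemma rel_of_total: "u \<in> set l \<Longrightarrow> v \<in> set l \<Longrightarrow> u \<noteq> v \<Longrightarrow> (u, v) \<in> rel_of l \<or> (v, u) \<in> rel_of l"
  by (induction l) auto

lemma rel_of_ranking: "distinct l \<Longrightarrow> set l = X \<Longrightarrow> ranking X (rel_of l)"
  unfolding ranking_def proto_ranking_def total_rel_def irrefl_def
  using rel_of_sub[of l] rel_of_irrefl[of l] rel_of_trans[of l] rel_of_total[of _ l] by blast

fun adj :: "'a list \<Rightarrow> ('a \<times> 'a) list" where
  "adj (a # b # l) = (a, b) # adj (b # l)"
| "adj _ = []"

lemma adj_snoc: "adj (l @ [z]) = adj l @ (if l = [] then [] else [(last l, z)])"
  by (induction l rule: adj.induct) auto

lemma adj_sub: "successively (\<lambda>u v. (u, v) \<in> W) l \<Longrightarrow> set (adj l) \<subseteq> W"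
  by (induction l rule: adj.induct) auto

lemma adj_rel: "set (adj l) \<subseteq> rel_of l"
  by (induction l rule: adj.induct) auto

lemma rel_adj: "rel_of l \<subseteq> trancl (set (adj l))"
proof (induction l rule: adj.induct)
  case (1 a b l)
  have m: "trancl (set (adj (b # l))) \<subseteq> trancl (set (adj (a # b # l)))"
    by (rule trancl_mono_subset) auto
  have ab: "(a, b) \<in> trancl (set (adj (a # b # l)))" by auto
  show ?case
  proof
    fix p assume p: "p \<in> rel_of (a # b # l)"
    show "p \<in> trancl (set (adj (a # b # l)))"
    proof (cases "p \<in> rel_of (b # l)")
      case True then show ?thesis using 1 m by blast
    next
      case False
      then have "p = (a, b) \<or> (\<exists>y. p = (a, y) \<and> (b, y) \<in> rel_of (b # l))" using p by auto
      then show ?thesis using ab 1 m by (meson subsetD trancl_trans)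
    qed
  qed
qed auto

lemma hist_adj: "distinct l \<Longrightarrow> trancl (set (adj l)) = rel_of l"
proof
  assume "distinct l"
  then have "trans (rel_of l)" by (rule rel_of_trans)
  then show "trancl (set (adj l)) \<subseteq> rel_of l"
    using adj_rel[of l] by (metis trancl_id trancl_mono_subset)
qed (rule rel_adj)



lemma unranked_swap: "unranked X R (prod.swap p) \<longleftrightarrow> unranked X R p"
  unfolding unranked_def by (cases p) auto

lemma valid_snoc: "valid_history X h \<Longrightarrow> unranked X (hist_state h) p \<Longrightarrow> valid_history X (h @ [p])"
  unfolding valid_history_def
  by (auto simp: nth_append less_Suc_eq)

lemma length_run: "length (run W s t) = t"
  by (induction t) auto

lemma feasible_eq_W:
  assumes T: "tournament X W" and tr: "trans W" and F: "feasible X W R"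
  shows "R = W"
proof -
  obtain s where st: "strategy X s" and oc: "outcome X W s R" using F unfolding feasible_def by blast
  obtain n where tot: "total_rel X (hist_state (run W s n))"
    and nt: "\<forall>m<n. \<not> total_rel X (hist_state (run W s m))" and R: "R = hist_state (run W s n)"
    using oc unfolding outcome_def by blast
  have "t \<le> n \<Longrightarrow> valid_history X (run W s t) \<and> set (run W s t) \<subseteq> W" for t
  proof (induction t)
    case 0 then show ?case by (simp add: valid_history_def)
  next
    case (Suc t)
    then have v: "valid_history X (run W s t)" and sub: "set (run W s t) \<subseteq> W" by auto
    have "nonterminal_history X (run W s t)" using v nt Suc.prems unfolding nonterminal_history_def by auto
    then have u: "unranked X (hist_state (run W s t)) (s (run W s t))" using st unfolding strategy_def by blast
    obtain p q where pq: "s (run W s t) = (p, q)" by fastforce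
    have wl: "winner_loser W (p, q) \<in> W" using u pq T
      unfolding winner_loser_def unranked_def tournament_def total_rel_def by auto
    have "unranked X (hist_state (run W s t)) (winner_loser W (p, q))"
      using u pq unranked_swap[of X _ "(p,q)"] unfolding winner_loser_def by auto
    from valid_snoc[OF v this] show ?case using sub wl pq by simp
  qed
  then have "set (run W s n) \<subseteq> W" by blast
  then have RW: "R \<subseteq> W" using tr unfolding R hist_state_def by (metis trancl_id trancl_mono_subset)
  show ?thesis
  proof
    show "W \<subseteq> R"
    proof
      fix p assume p: "p \<in> W"
      obtain u v where uv: "p = (u, v)" by fastforce
      have "u \<in> X" "v \<in> X" "u \<noteq> v" using T p uv unfolding tournament_def by auto
      then have "(u, v) \<in> R \<or> (v, u) \<in> R" using tot R unfolding total_rel_def by auto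
      then show "p \<in> R" using RW T p uv unfolding tournament_def by auto
    qed
  qed (rule RW)
qed

definition good :: "'a set \<Rightarrow> ('a \<times> 'a) set \<Rightarrow> 'a list \<Rightarrow> bool" where
  "good X W l \<longleftrightarrow> distinct l \<and> set l = X \<and> successively (\<lambda>u v. (u, v) \<in> W) l"

lemma feasible_good:
  assumes g: "good X W l" and ne: "l \<noteq> []"
  shows "feasible X W (rel_of l)"
proof -
  have d: "distinct l" and sl: "set l = X" and pth: "successively (\<lambda>u v. (u, v) \<in> W) l"
    using g unfolding good_def by auto
  define q where "q h = (l ! length h, l ! Suc (length h))" for h :: "('a \<times> 'a) list"
  define s where "s h = (if unranked X (hist_state h) (q h) then q h else (SOME p. unranked X (hist_state h) p))" for h
  have st: "strategy X s"
    unfolding strategy_def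
  proof (intro allI impI)
    fix h assume "nonterminal_history X h"
    then obtain u v where "u \<in> X" "v \<in> X" "u \<noteq> v" "(u, v) \<notin> hist_state h" "(v, u) \<notin> hist_state h"
      unfolding nonterminal_history_def total_rel_def by auto
    then have "unranked X (hist_state h) (u, v)" unfolding unranked_def by auto
    then show "unranked X (hist_state h) (s h)" unfolding s_def by (auto intro: someI)
  qed
  have tk: "set (take (Suc t) l) \<subseteq> X" for t using sl by (meson set_take_subset order.trans order.refl)
  have notin: "l ! Suc t \<notin> set (take (Suc t) l)" if "Suc t < length l" for t
  proof
    assume "l ! Suc t \<in> set (take (Suc t) l)"
    then obtain i where "i < Suc t" "l ! i = l ! Suc t" using that by (auto simp: in_set_conv_nth)
    then show False using d that by (simp add: nth_eq_iff_index_eq)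
  qed
  have run_eq: "Suc t \<le> length l \<Longrightarrow> run W s t = adj (take (Suc t) l)" for t
  proof (induction t)
    case 0 then show ?case using ne by (cases l) auto
  next
    case (Suc t)
    have IH: "run W s t = adj (take (Suc t) l)" using Suc by auto
    have lt: "Suc t < length l" using Suc.prems by auto
    have len: "length (run W s t) = t" by (rule length_run)
    have hs: "hist_state (run W s t) = rel_of (take (Suc t) l)"
      unfolding IH hist_state_def using d by (simp add: hist_adj)
    have un: "unranked X (hist_state (run W s t)) (q (run W s t))"
      unfolding hs q_def len unranked_def using lt sl d notin[OF lt] rel_of_sub[of "take (Suc t) l"]
      by (auto simp: nth_eq_iff_index_eq)
    have inW: "(l ! t, l ! Suc t) \<in> W" using successively_nth[OF pth lt] by simp
    have "run W s (Suc t) = adj (take (Suc t) l) @ [(l ! t, l ! Suc t)]"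
      using un inW unfolding IH[symmetric] by (simp add: s_def q_def len winner_loser_def)
    also have "\<dots> = adj (take (Suc (Suc t)) l)"
    proof -
      have e: "take (Suc (Suc t)) l = take (Suc t) l @ [l ! Suc t]" by (rule take_Suc_conv_app_nth[OF lt])
      have la: "last (take (Suc t) l) = l ! t" using lt by (subst last_conv_nth) auto
      show ?thesis unfolding e adj_snoc la using lt by (cases l) auto
    qed
    finally show ?case .
  qed
  define n where "n = length l - 1"
  have hsr: "m \<le> n \<Longrightarrow> hist_state (run W s m) = rel_of (take (Suc m) l)" for m
  proof -
    assume "m \<le> n"
    then have "Suc m \<le> length l" using ne unfolding n_def by (cases l) auto
    then show ?thesis using run_eq[of m] d unfolding hist_state_def by (simp add: hist_adj)
  qed
  have "outcome X W s (rel_of l)"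
    unfolding outcome_def
  proof (intro exI conjI allI impI)
    have "take (Suc n) l = l" using ne unfolding n_def by simp
    then show eq: "rel_of l = hist_state (run W s n)" using hsr[of n] by simp
    show "total_rel X (hist_state (run W s n))" unfolding eq[symmetric]
      using rel_of_ranking[OF d sl] unfolding ranking_def by blast
  next
    fix m assume mn: "m < n"
    then have lt: "Suc m < length l" unfolding n_def by simp
    have a: "l ! 0 \<in> set (take (Suc m) l)" using ne by (cases l) auto
    have b: "l ! 0 \<noteq> l ! Suc m" using d lt by (subst nth_eq_iff_index_eq) auto
    show "\<not> total_rel X (hist_state (run W s m))"
      unfolding hsr[OF less_imp_le[OF mn]] total_rel_def
    proof
      assume H: "\<forall>x\<in>X. \<forall>y\<in>X. x \<noteq> y \<longrightarrow> (x, y) \<in> rel_of (take (Suc m) l) \<or> (y, x) \<in> rel_of (take (Suc m) l)"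
      have "l ! 0 \<in> X" "l ! Suc m \<in> X" using lt sl by (auto intro!: nth_mem)
      then have "(l ! 0, l ! Suc m) \<in> rel_of (take (Suc m) l) \<or> (l ! Suc m, l ! 0) \<in> rel_of (take (Suc m) l)"
        using H b by blast
      then show False using notin[OF lt] rel_of_sub[of "take (Suc m) l"] by blast
    qed
  qed
  then show ?thesis unfolding feasible_def using st rel_of_ranking[OF d sl] by blast
qed



lemma total_rel_mono: "total_rel X R \<Longrightarrow> Y \<subseteq> X \<Longrightarrow> total_rel Y R"
  unfolding total_rel_def by blast

lemma ins_path:
  "successively (\<lambda>u v. (u, v) \<in> W) (y # l) \<Longrightarrow> (y, a) \<in> W \<Longrightarrow> a \<notin> set (y # l) \<Longrightarrow>
   total_rel (insert a (set l)) W \<Longrightarrow> distinct (y # l) \<Longrightarrow>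
   \<exists>r. successively (\<lambda>u v. (u, v) \<in> W) (y # r) \<and> set r = insert a (set l) \<and> distinct (y # r)"
proof (induction l arbitrary: y)
  case Nil
  then show ?case by (intro exI[of _ "[a]"]) auto
next
  case (Cons z l)
  show ?case
  proof (cases "(a, z) \<in> W")
    case True
    then show ?thesis using Cons.prems by (intro exI[of _ "a # z # l"]) auto
  next
    case False
    then have za: "(z, a) \<in> W" using Cons.prems unfolding total_rel_def by auto
    have "total_rel (insert a (set l)) W" using Cons.prems(4) by (rule total_rel_mono) auto
    then obtain r where r: "successively (\<lambda>u v. (u, v) \<in> W) (z # r)" "set r = insert a (set l)" "distinct (z # r)"
      using Cons.IH[of z] Cons.prems za by auto
    show ?thesis using r Cons.prems by (intro exI[of _ "z # r"]) auto
  qed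
qed

lemma path_exists:
  assumes "finite S"
  shows "total_rel S W \<Longrightarrow> \<exists>l. good S W l"
  using assms
proof (induction S rule: finite_induct)
  case empty
  then show ?case by (intro exI[of _ "[]"]) (auto simp: good_def)
next
  case (insert a F)
  have "total_rel F W" using insert.prems by (rule total_rel_mono) auto
  then obtain l where l: "good F W l" using insert.IH by blast
  show ?case
  proof (cases l)
    case Nil
    then show ?thesis using l by (intro exI[of _ "[a]"]) (auto simp: good_def)
  next
    case (Cons y l')
    show ?thesis
    proof (cases "(a, y) \<in> W")
      case True
      then show ?thesis using l Cons insert.hyps by (intro exI[of _ "a # l"]) (auto simp: good_def)
    next
      case False
      have ya: "y \<noteq> a" using insert.hyps l Cons by (auto simp: good_def)
      then have "(y, a) \<in> W" using False insert.prems l Cons unfolding total_rel_def good_def by auto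
      moreover have "total_rel (insert a (set l')) W" using insert.prems
        by (rule total_rel_mono) (use l Cons in \<open>auto simp: good_def\<close>)
      ultimately obtain r where "successively (\<lambda>u v. (u, v) \<in> W) (y # r)" "set r = insert a (set l')" "distinct (y # r)"
        using ins_path[of W y l' a] l Cons insert.hyps by (auto simp: good_def)
      then show ?thesis using l Cons by (intro exI[of _ "y # r"]) (auto simp: good_def)
    qed
  qed
qed

lemma pmax:
  assumes "finite X" "X \<noteq> {}"
  shows "trans P \<Longrightarrow> irrefl P \<Longrightarrow> total_rel X P \<Longrightarrow> \<exists>x\<in>X. \<forall>y\<in>X. y \<noteq> x \<longrightarrow> (x, y) \<in> P"
  using assms
proof (induction X rule: finite_ne_induct)
  case (singleton x) then show ?case by auto
next
  case (insert a F)
  have "total_rel F P" using insert.prems(3) by (rule total_rel_mono) auto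
  then obtain m where m: "m \<in> F" "\<forall>y\<in>F. y \<noteq> m \<longrightarrow> (m, y) \<in> P" using insert by blast
  show ?case
  proof (cases "(m, a) \<in> P")
    case True then show ?thesis using m by auto
  next
    case False
    then have "(a, m) \<in> P" using insert.prems m insert.hyps unfolding total_rel_def by auto
    have "\<forall>y\<in>insert a F. y \<noteq> a \<longrightarrow> (a, y) \<in> P"
    proof (intro ballI impI)
      fix y assume "y \<in> insert a F" "y \<noteq> a"
      then have "y \<in> F" by auto
      show "(a, y) \<in> P"
      proof (cases "y = m")
        case True then show ?thesis using \<open>(a, m) \<in> P\<close> by simp
      next
        case False
        then have "(m, y) \<in> P" using m \<open>y \<in> F\<close> by auto
        then show ?thesis using \<open>(a, m) \<in> P\<close> insert.prems(1) unfolding trans_def by blast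
      qed
    qed
    then show ?thesis by auto
  qed
qed

lemma run_lemma: "\<exists>u\<in>set l. f u \<Longrightarrow> \<exists>b g. l = b @ g \<and> b \<noteq> [] \<and> f (last b) \<and> (g = [] \<or> \<not> f (hd g))"
proof (induction l)
  case Nil then show ?case by simp
next
  case (Cons a l)
  show ?case
  proof (cases "\<exists>u\<in>set l. f u")
    case True
    then obtain b g where "l = b @ g" "b \<noteq> []" "f (last b)" "g = [] \<or> \<not> f (hd g)" using Cons.IH by blast
    then show ?thesis by (intro exI[of _ "a # b"] exI[of _ g]) auto
  next
    case False
    then have "f a" using Cons.prems by auto
    then show ?thesis using False by (intro exI[of _ "[a]"] exI[of _ l]) (cases l, auto)
  qed
qed

lemma split_nonAB:
  "\<not> (\<exists>s1 s2. l = s1 @ s2 \<and> (\<forall>u\<in>set s1. f u) \<and> (\<forall>u\<in>set s2. \<not> f u)) \<Longrightarrow>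
   \<exists>a b g. l = a @ b @ g \<and> b \<noteq> [] \<and> (a = [] \<or> f (last a)) \<and> \<not> f (hd b) \<and> f (last b) \<and> (g = [] \<or> \<not> f (hd g))"
proof (induction l)
  case Nil then show ?case by auto
next
  case (Cons y l)
  show ?case
  proof (cases "f y")
    case True
    have "\<not> (\<exists>s1 s2. l = s1 @ s2 \<and> (\<forall>u\<in>set s1. f u) \<and> (\<forall>u\<in>set s2. \<not> f u))"
    proof (rule notI)
      assume "\<exists>s1 s2. l = s1 @ s2 \<and> (\<forall>u\<in>set s1. f u) \<and> (\<forall>u\<in>set s2. \<not> f u)"
      then obtain s1 s2 where "l = s1 @ s2" "\<forall>u\<in>set s1. f u" "\<forall>u\<in>set s2. \<not> f u" by blast
      then have "y # l = (y # s1) @ s2 \<and> (\<forall>u\<in>set (y # s1). f u) \<and> (\<forall>u\<in>set s2. \<not> f u)" using True by simp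
      then show False using Cons.prems by blast
    qed
    then obtain a b g where abg: "l = a @ b @ g" "b \<noteq> []" "a = [] \<or> f (last a)" "\<not> f (hd b)" "f (last b)" "g = [] \<or> \<not> f (hd g)"
      using Cons.IH by blast
    show ?thesis using abg True by (intro exI[of _ "y # a"] exI[of _ b] exI[of _ g]) auto
  next
    case False
    have "\<exists>u\<in>set (y # l). f u"
    proof (rule ccontr)
      assume "\<not> ?thesis"
      then have "y # l = [] @ (y # l) \<and> (\<forall>u\<in>set []. f u) \<and> (\<forall>u\<in>set (y # l). \<not> f u)" by simp
      then show False using Cons.prems by blast
    qed
    then obtain b g where "y # l = b @ g" "b \<noteq> []" "f (last b)" "g = [] \<or> \<not> f (hd g)"
      using run_lemma[of "y # l" f] by blast
    then show ?thesis using False by (intro exI[of _ "[]"] exI[of _ b] exI[of _ g]) (cases b, auto)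
  qed
qed



lemma direct:
  assumes g: "good X' W (a @ b @ c)" and xn: "x \<notin> X'"
    and Pm: "\<forall>y\<in>X'. (x, y) \<in> P" and Pa: "\<forall>u v. (u, v) \<in> P \<longrightarrow> (v, u) \<notin> P"
    and bne: "b \<noteq> []" and ha: "a = [] \<or> (last a, x) \<in> W" and hb: "(x, hd b) \<in> W"
    and lb: "(last b, x) \<in> W" and hc: "c = [] \<or> (x, hd c) \<in> W"
  shows "\<exists>s t. good (insert x X') W s \<and> good (insert x X') W t \<and> rel_of s \<noteq> rel_of t \<and> more_aligned P (rel_of t) (rel_of s)"
proof (intro exI conjI)
  have d: "distinct (a @ b @ c)" and st: "set (a @ b @ c) = X'" and p: "successively (\<lambda>u v. (u, v) \<in> W) (a @ b @ c)"
    using g unfolding good_def by auto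
  have hbb: "(a \<noteq> [] \<longrightarrow> (last a, hd b) \<in> W)" using p bne by (auto simp: successively_append_iff)
  have hbc: "(c \<noteq> [] \<longrightarrow> (last b, hd c) \<in> W)" using p bne by (auto simp: successively_append_iff)
  show "good (insert x X') W (a @ b @ x # c)"
    unfolding good_def using d st p xn bne ha lb hc hbb
    by (auto simp: successively_append_iff successively_Cons)
  show "good (insert x X') W (a @ x # b @ c)"
    unfolding good_def using d st p xn bne ha hb hbc hbb
    by (auto simp: successively_append_iff successively_Cons)
  have xb: "(x, hd b) \<in> rel_of (a @ x # b @ c)" using bne by (simp add: rel_of_append)
  have "(x, hd b) \<notin> rel_of (a @ b @ x # c)"
  proof
    assume "(x, hd b) \<in> rel_of (a @ b @ x # c)"
    moreover have "hd b \<in> set b" using bne by simp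
    ultimately show False using xn st d rel_of_sub[of a] rel_of_sub[of b] rel_of_sub[of c]
      by (auto simp: rel_of_append)
  qed
  then show "rel_of (a @ b @ x # c) \<noteq> rel_of (a @ x # b @ c)" using xb by blast
  show "more_aligned P (rel_of (a @ x # b @ c)) (rel_of (a @ b @ x # c))"
    unfolding more_aligned_def
  proof (intro allI impI)
    fix u v assume uvP: "(u, v) \<in> P" and uv: "(u, v) \<in> rel_of (a @ b @ x # c)"
    have "u \<in> set b \<and> v = x \<longrightarrow> False" using Pm Pa uvP st by auto
    then show "(u, v) \<in> rel_of (a @ x # b @ c)" using uv by (auto simp: rel_of_append)
  qed
qed



definition nontrans :: "'a set \<Rightarrow> ('a \<times> 'a) set \<Rightarrow> bool" where
  "nontrans X W \<longleftrightarrow> (\<exists>u\<in>X. \<exists>v\<in>X. \<exists>w\<in>X. (u, v) \<in> W \<and> (v, w) \<in> W \<and> (u, w) \<notin> W)"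

lemma path_trans_sub:
  "successively (\<lambda>u v. (u, v) \<in> W) l \<Longrightarrow>
   (\<forall>u\<in>set l. \<forall>v\<in>set l. \<forall>w\<in>set l. (u, v) \<in> W \<longrightarrow> (v, w) \<in> W \<longrightarrow> (u, w) \<in> W) \<Longrightarrow> rel_of l \<subseteq> W"
proof (induction l)
  case Nil then show ?case by simp
next
  case (Cons a l)
  note T = Cons.prems(2)
  have sl: "successively (\<lambda>u v. (u, v) \<in> W) l" using Cons.prems(1) by (cases l) auto
  have T': "\<forall>u\<in>set l. \<forall>v\<in>set l. \<forall>w\<in>set l. (u, v) \<in> W \<longrightarrow> (v, w) \<in> W \<longrightarrow> (u, w) \<in> W"
    using T by (meson list.set_intros(2))
  have IH: "rel_of l \<subseteq> W" using Cons.IH[OF sl T'] .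
  have "(a, y) \<in> W" if y: "y \<in> set l" for y
  proof (cases l)
    case Nil then show ?thesis using y by simp
  next
    case (Cons b l')
    have ab: "(a, b) \<in> W" using \<open>successively (\<lambda>u v. (u, v) \<in> W) (a # l)\<close> Cons by simp
    show ?thesis
    proof (cases "y = b")
      case True then show ?thesis using ab by simp
    next
      case False
      then have "(b, y) \<in> rel_of l" using y Cons by simp
      then have bY: "(b, y) \<in> W" using IH by blast
      have "a \<in> set (a # l)" "b \<in> set (a # l)" "y \<in> set (a # l)" using y Cons by auto
      then show ?thesis using T ab bY by blast
    qed
  qed
  then show ?case using IH by auto
qed

lemma main:
  assumes "finite X"
  shows "total_rel X W \<Longrightarrow> (\<forall>u v. (u, v) \<in> W \<longrightarrow> (v, u) \<notin> W) \<Longrightarrow> nontrans X W \<Longrightarrow>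
    trans P \<Longrightarrow> irrefl P \<Longrightarrow> total_rel X P \<Longrightarrow>
    \<exists>s t. good X W s \<and> good X W t \<and> rel_of s \<noteq> rel_of t \<and> more_aligned P (rel_of t) (rel_of s)"
  using assms
proof (induction X rule: finite_psubset_induct)
  case (psubset X)
  note tW = psubset.prems(1) and aW = psubset.prems(2) and nt = psubset.prems(3)
    and tP = psubset.prems(4) and iP = psubset.prems(5) and totP = psubset.prems(6)
  have "X \<noteq> {}" using nt unfolding nontrans_def by auto
  then obtain x where xX: "x \<in> X" and xm: "\<forall>y\<in>X. y \<noteq> x \<longrightarrow> (x, y) \<in> P"
    using pmax[OF psubset.hyps(1) _ tP iP totP] by blast
  define X' where "X' = X - {x}"
  have XX: "X = insert x X'" and xn: "x \<notin> X'" using xX unfolding X'_def by auto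
  have Pm: "\<forall>y\<in>X'. (x, y) \<in> P" using xm unfolding X'_def by auto
  have Pa: "\<forall>u v. (u, v) \<in> P \<longrightarrow> (v, u) \<notin> P" using tP iP unfolding trans_def irrefl_def by blast
  have out: "(x, u) \<in> W" if "u \<in> X'" "(u, x) \<notin> W" for u
    using that tW xX unfolding total_rel_def X'_def by auto
  define f where "f u = ((u, x) \<in> W)" for u
  define AB where "AB l = (\<exists>s1 s2. l = s1 @ s2 \<and> (\<forall>u\<in>set s1. f u) \<and> (\<forall>u\<in>set s2. \<not> f u))" for l
  let ?G = "\<exists>s t. good X W s \<and> good X W t \<and> rel_of s \<noteq> rel_of t \<and> more_aligned P (rel_of t) (rel_of s)"
  have dir: ?G if l: "good X' W l" and nab: "\<not> AB l" for l
  proof -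
    obtain a b c where abc: "l = a @ b @ c" "b \<noteq> []" "a = [] \<or> f (last a)" "\<not> f (hd b)" "f (last b)" "c = [] \<or> \<not> f (hd c)"
      using split_nonAB[of l f] nab unfolding AB_def by blast
    have sl: "set l = X'" using l unfolding good_def by auto
    have "hd b \<in> X'" using abc sl by auto
    then have hb: "(x, hd b) \<in> W" using out abc unfolding f_def by auto
    have hc: "c = [] \<or> (x, hd c) \<in> W"
    proof (cases c)
      case (Cons z c') then have "z \<in> X'" using abc sl by auto
      then show ?thesis using out abc Cons unfolding f_def by auto
    qed simp
    show ?thesis
      using direct[of X' W a b c x P] l abc hb hc xn Pm Pa unfolding XX f_def by blast
  qed
  have ins: "good X W (s1 @ x # s2) \<and> set s1 = {u\<in>X'. f u} \<and> set s2 = {u\<in>X'. \<not> f u} \<and>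
      rel_of (s1 @ x # s2) = rel_of (s1 @ s2) \<union> set s1 \<times> {x} \<union> {x} \<times> set s2"
    if g: "good X' W (s1 @ s2)" and h1: "\<forall>u\<in>set s1. f u" and h2: "\<forall>u\<in>set s2. \<not> f u" for s1 s2
  proof (intro conjI)
    have d: "distinct (s1 @ s2)" and st: "set (s1 @ s2) = X'" and p: "successively (\<lambda>u v. (u, v) \<in> W) (s1 @ s2)"
      using g unfolding good_def by auto
    have l1: "s1 \<noteq> [] \<longrightarrow> (last s1, x) \<in> W" using h1 unfolding f_def by auto
    have l2: "s2 \<noteq> [] \<longrightarrow> (x, hd s2) \<in> W" using h2 st out unfolding f_def by (cases s2) auto
    show "good X W (s1 @ x # s2)" unfolding good_def XX using d st p xn l1 l2
      by (auto simp: successively_append_iff successively_Cons)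
    show "set s1 = {u\<in>X'. f u}" using st h1 h2 by auto
    show "set s2 = {u\<in>X'. \<not> f u}" using st h1 h2 by auto
    show "rel_of (s1 @ x # s2) = rel_of (s1 @ s2) \<union> set s1 \<times> {x} \<union> {x} \<times> set s2"
      by (auto simp: rel_of_append)
  qed
  have tW': "total_rel X' W" using tW by (rule total_rel_mono) (auto simp: X'_def)
  have tP': "total_rel X' P" using totP by (rule total_rel_mono) (auto simp: X'_def)
  have fin': "finite X'" using psubset.hyps(1) unfolding X'_def by auto
  show ?G
  proof (cases "nontrans X' W")
    case True
    have "X' \<subset> X" using XX xn by auto
    then obtain s0 t0 where st0: "good X' W s0" "good X' W t0" "rel_of s0 \<noteq> rel_of t0" "more_aligned P (rel_of t0) (rel_of s0)"
      using psubset.IH[of X'] tW' aW True tP iP tP' by blast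
    show ?thesis
    proof (cases "AB s0 \<and> AB t0")
      case False then show ?thesis using dir st0 by blast
    next
      case True
      then obtain s1 s2 t1 t2 where s: "s0 = s1 @ s2" "\<forall>u\<in>set s1. f u" "\<forall>u\<in>set s2. \<not> f u"
        and t: "t0 = t1 @ t2" "\<forall>u\<in>set t1. f u" "\<forall>u\<in>set t2. \<not> f u" unfolding AB_def by blast
      have iS: "good X W (s1 @ x # s2)" "set s1 = {u\<in>X'. f u}" "set s2 = {u\<in>X'. \<not> f u}"
          "rel_of (s1 @ x # s2) = rel_of s0 \<union> set s1 \<times> {x} \<union> {x} \<times> set s2"
      proof -
        have "good X' W (s1 @ s2)" using st0(1) s(1) by simp
        from ins[OF this s(2) s(3)] show "good X W (s1 @ x # s2)" "set s1 = {u\<in>X'. f u}" "set s2 = {u\<in>X'. \<not> f u}"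
          "rel_of (s1 @ x # s2) = rel_of s0 \<union> set s1 \<times> {x} \<union> {x} \<times> set s2" unfolding s(1) by blast+
      qed
      have it: "good X W (t1 @ x # t2)" "set t1 = {u\<in>X'. f u}" "set t2 = {u\<in>X'. \<not> f u}"
          "rel_of (t1 @ x # t2) = rel_of t0 \<union> set t1 \<times> {x} \<union> {x} \<times> set t2"
      proof -
        have "good X' W (t1 @ t2)" using st0(2) t(1) by simp
        from ins[OF this t(2) t(3)] show "good X W (t1 @ x # t2)" "set t1 = {u\<in>X'. f u}" "set t2 = {u\<in>X'. \<not> f u}"
          "rel_of (t1 @ x # t2) = rel_of t0 \<union> set t1 \<times> {x} \<union> {x} \<times> set t2" unfolding t(1) by blast+
      qed
      have rs: "rel_of s0 \<subseteq> X' \<times> X'" "rel_of t0 \<subseteq> X' \<times> X'"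
        using rel_of_sub[of s0] rel_of_sub[of t0] st0 unfolding good_def by auto
      have ne: "rel_of (s1 @ x # s2) \<noteq> rel_of (t1 @ x # t2)"
      proof
        assume "rel_of (s1 @ x # s2) = rel_of (t1 @ x # t2)"
        then have "rel_of s0 \<union> set s1 \<times> {x} \<union> {x} \<times> set s2 = rel_of t0 \<union> set s1 \<times> {x} \<union> {x} \<times> set s2"
          using iS it by simp
        then have "rel_of s0 = rel_of t0" using rs xn by blast
        then show False using st0 by simp
      qed
      have ma: "more_aligned P (rel_of (t1 @ x # t2)) (rel_of (s1 @ x # s2))"
        using st0(4) unfolding more_aligned_def iS(4) it(4) iS(2,3) it(2,3) by blast
      show ?thesis using iS it ne ma by blast
    qed
  next
    case False
    obtain l0 where l0: "good X' W l0" using path_exists[OF fin' tW'] by blast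
    show ?thesis
    proof (cases "AB l0")
      case False then show ?thesis using dir l0 by blast
    next
      case True
      then obtain s1 s2 where s: "l0 = s1 @ s2" "\<forall>u\<in>set s1. f u" "\<forall>u\<in>set s2. \<not> f u"
        unfolding AB_def by blast
      have trX': "\<forall>u\<in>X'. \<forall>v\<in>X'. \<forall>w\<in>X'. (u, v) \<in> W \<longrightarrow> (v, w) \<in> W \<longrightarrow> (u, w) \<in> W"
      proof (intro ballI impI)
        fix u v w assume "u \<in> X'" "v \<in> X'" "w \<in> X'" "(u, v) \<in> W" "(v, w) \<in> W"
        then show "(u, w) \<in> W" using False unfolding nontrans_def by blast
      qed
      have "rel_of l0 \<subseteq> W"
      proof (rule path_trans_sub)
        show "successively (\<lambda>u v. (u, v) \<in> W) l0" using l0 unfolding good_def by blast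
        have "set l0 = X'" using l0 unfolding good_def by blast
        then show "\<forall>u\<in>set l0. \<forall>v\<in>set l0. \<forall>w\<in>set l0. (u, v) \<in> W \<longrightarrow> (v, w) \<in> W \<longrightarrow> (u, w) \<in> W"
          using trX' by (simp only:)
      qed
      then have "rel_of (s1 @ s2) \<subseteq> W" using s(1) by (simp only:)
      then have AB': "set s1 \<times> set s2 \<subseteq> W" using rel_of_append[of s1 s2] by blast
      have iS: "set s1 = {u\<in>X'. f u}" "set s2 = {u\<in>X'. \<not> f u}"
      proof -
        have "good X' W (s1 @ s2)" using l0 s(1) by simp
        from ins[OF this s(2) s(3)] show "set s1 = {u\<in>X'. f u}" "set s2 = {u\<in>X'. \<not> f u}" by blast+
      qed
      have "\<not> nontrans X W"
        unfolding nontrans_def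
      proof (intro notI, elim bexE conjE)
        fix u v w assume u: "u \<in> X" and v: "v \<in> X" and w: "w \<in> X" and uv: "(u, v) \<in> W"
          and vw: "(v, w) \<in> W" and uw: "(u, w) \<notin> W"
        have irr: "(y, y) \<notin> W" for y using aW by blast
        show False
        proof (cases "u = x")
          case True
          then have vB: "v \<in> set s2" using iS uv v XX aW irr unfolding f_def by auto
          have "w \<noteq> x" using True uv vw aW by blast
          then have "w \<in> X'" using w XX by auto
          then show ?thesis using iS vB vw AB' aW True uw out unfolding f_def by blast
        next
          case ux: False
          show ?thesis
          proof (cases "v = x")
            case True
            then have "u \<in> set s1" "w \<in> set s2" using iS uv vw u w XX ux aW irr unfolding f_def by auto
            then show ?thesis using AB' uw by blast
          next
            case vx: False
            show ?thesis
            proof (cases "w = x")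
              case True
              then have vA: "v \<in> set s1" using iS vw v vx XX unfolding f_def by auto
              have "u \<in> X'" using u ux XX by auto
              then show ?thesis using iS vA uv AB' aW True uw unfolding f_def by blast
            next
              case False
              then show ?thesis using trX' u v w ux vx uv vw uw XX by blast
            qed
          qed
        qed
      qed
      then show ?thesis using nt by blast
    qed
  qed
qed



theorem proposition6:
  fixes X :: "'a set" and W :: "('a \<times> 'a) set"
  assumes "finite X" and "tournament X W"
  shows "(\<not> ranking X W \<longleftrightarrow> (\<exists>P. ranking X P \<and> benefits X W P))
       \<and> (\<not> ranking X W \<longleftrightarrow> (\<forall>P. ranking X P \<longrightarrow> benefits X W P))"
proof -
  have sub: "W \<subseteq> X \<times> X" and tW: "total_rel X W" and aW: "\<forall>u v. (u, v) \<in> W \<longrightarrow> (v, u) \<notin> W"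
    using assms(2) unfolding tournament_def by auto
  have r_iff: "ranking X W \<longleftrightarrow> trans W"
    using sub tW aW unfolding ranking_def proto_ranking_def irrefl_def by blast
  have no: "\<not> benefits X W P" if "ranking X W" for P
  proof
    assume "benefits X W P"
    then obtain R R' where "feasible X W R" "feasible X W R'" "R' \<noteq> R"
      unfolding benefits_def unimprovable_def by blast
    then show False using feasible_eq_W[OF assms(2)] that r_iff by blast
  qed
  have yes: "benefits X W P" if nr: "\<not> ranking X W" and P: "ranking X P" for P
  proof -
    have "nontrans X W" using nr r_iff sub unfolding nontrans_def trans_def by blast
    moreover have "trans P" "irrefl P" "total_rel X P" using P unfolding ranking_def proto_ranking_def by auto
    ultimately obtain s t where st: "good X W s" "good X W t" "rel_of s \<noteq> rel_of t" "more_aligned P (rel_of t) (rel_of s)"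
      using main[OF assms(1) tW aW] by blast
    have "s \<noteq> []" "t \<noteq> []" using st by (auto simp: good_def)
    then have "feasible X W (rel_of s)" "feasible X W (rel_of t)" using feasible_good st by auto
    then show ?thesis unfolding benefits_def unimprovable_def using st by blast
  qed
  obtain xs where xs: "set xs = X" "distinct xs" using finite_distinct_list[OF assms(1)] by blast
  have rP: "ranking X (rel_of xs)" using rel_of_ranking xs by blast
  show ?thesis using no yes rP by blast
qed


end
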